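(* Let $A$ be an $n\times n$ right stochastic matrix with Dobrushin coefficient $\sigma(A)>0$, and let $\{A_k\}_{k\in\mathbb{N}}$ be a sequence of $n\times n$ right stochastic matrices. Let $\mu^*$ be the unique probability vector with $\mu^*=\mu^*A$. For every $\epsilon\in(0,1)$, if \[ \sup_{k\in\mathbb{N}}\|A_k-A\|_\infty\le\frac{\sigma(A)\,\epsilon}{2n}, \] then for every probability (row) vector $\mu_0$ of dimension $n$, \[ \limsup_{k\to\infty}\|\mu_0A_0A_1\cdots A_k-\mu^*\|_1\le\epsilon . \]
   Context: The Dobrushin coefficient of an $n\times n$ right stochastic matrix $A$ is $\sigma(A)=\min_{i,k\in\{1,\dots,n\}}\sum_{j=1}^n\min\{A(i,j),A(k,j)\}\in[0,1]$. $\|M\|_\infty$ denotes the maximum absolute entry (or the induced max-row-sum norm) of a matrix; probability vectors are row vectors and $\|\cdot\|_1$ is the $\ell^1$ norm. *)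

theory Defs
  imports "HOL-Analysis.Analysis"
begin

text \<open>n x n real matrices are represented as real^'n^'n with 'n a finite index type
 (n = CARD('n)); row vectors as real^'n, and the row-vector/matrix product is v* .\<close>

definition right_stochastic :: "real^'n::finite^'n \<Rightarrow> bool" where
  "right_stochastic A \<longleftrightarrow> (\<forall>i j. A $ i $ j \<ge> 0) \<and> (\<forall>i. (\<Sum>j\<in>UNIV. A $ i $ j) = 1)"

definition prob_vector :: "real^'n::finite \<Rightarrow> bool" where
  "prob_vector v \<longleftrightarrow> (\<forall>i. v $ i \<ge> 0) \<and> (\<Sum>i\<in>UNIV. v $ i) = 1"

definition dobrushin :: "real^'n::finite^'n \<Rightarrow> real" where
  "dobrushin A = Min {(\<Sum>j\<in>UNIV. min (A $ i $ j) (A $ k $ j)) | i k. True}"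

definition max_abs_entry :: "real^'n::finite^'n \<Rightarrow> real" where
  "max_abs_entry M = Max {\<bar>M $ i $ j\<bar> | i j. True}"

definition norm1 :: "real^'n::finite \<Rightarrow> real" where
  "norm1 v = (\<Sum>i\<in>UNIV. \<bar>v $ i\<bar>)"

fun left_prod :: "(nat \<Rightarrow> real^'n::finite^'n) \<Rightarrow> nat \<Rightarrow> real^'n^'n" where
  "left_prod As 0 = As 0"
| "left_prod As (Suc k) = left_prod As k ** As (Suc k)"

end

theory Submission
  imports Defs
begin

lemma vm_nth: "(x v* M) $ j = (\<Sum>i\<in>UNIV. x$i * M$i$j)"
  by (simp add: vector_matrix_mult_def)

lemma vm_diff_left: "(x - y) v* (M::real^'n::finite^'n) = x v* M - y v* M"
  by (simp add: vec_eq_iff vm_nth left_diff_distrib sum_subtractf)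

lemma vm_diff_right: "x v* ((B::real^'n::finite^'n) - M) = x v* B - x v* M"
  by (simp add: vec_eq_iff vm_nth right_diff_distrib sum_subtractf)

lemma norm1_add: "norm1 (x + y) \<le> norm1 x + norm1 y"
  unfolding norm1_def by (simp add: sum.distrib[symmetric] sum_mono abs_triangle_ineq)

lemma norm1_diff: "norm1 (x - y) \<le> norm1 x + norm1 y"
  unfolding norm1_def by (simp add: sum.distrib[symmetric] sum_mono abs_triangle_ineq4)

lemma norm1_prob: "prob_vector v \<Longrightarrow> norm1 v = 1"
  unfolding norm1_def prob_vector_def by simp

lemma dob_le: "dobrushin A \<le> (\<Sum>j\<in>UNIV. min (A $ i $ j) (A $ k $ j))"
  unfolding dobrushin_def
proof (rule Min_le)
  have "{(\<Sum>j\<in>UNIV. min (A $ i $ j) (A $ k $ j)) | i k. True}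
     = (\<lambda>(i,k). \<Sum>j\<in>UNIV. min (A $ i $ j) (A $ k $ j)) ` UNIV" by auto
  then show "finite {(\<Sum>j\<in>UNIV. min (A $ i $ j) (A $ k $ j)) | i k. True}" by simp
qed auto

lemma dob_le1: "right_stochastic A \<Longrightarrow> dobrushin A \<le> 1"
  using dob_le[of A undefined undefined] unfolding right_stochastic_def by simp

lemma max_abs_ge: "\<bar>M $ i $ j\<bar> \<le> max_abs_entry M"
  unfolding max_abs_entry_def
proof (rule Max_ge)
  have "{\<bar>M $ i $ j\<bar> | i j. True} = (\<lambda>(i,j). \<bar>M $ i $ j\<bar>) ` UNIV" by auto
  then show "finite {\<bar>M $ i $ j\<bar> | i j. True}" by simp
qed auto

lemma prob_mult: "prob_vector v \<Longrightarrow> right_stochastic A \<Longrightarrow> prob_vector (v v* A)"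
  unfolding prob_vector_def right_stochastic_def
  by (auto simp: vm_nth sum.swap[of _ UNIV UNIV] sum_distrib_left[symmetric] intro!: sum_nonneg)

lemma perturb: "norm1 (x v* (M::real^'n::finite^'n)) \<le> norm1 x * (real CARD('n) * max_abs_entry M)"
proof -
  have "norm1 (x v* M) \<le> (\<Sum>j\<in>(UNIV::'n set). \<Sum>i\<in>UNIV. \<bar>x$i\<bar> * max_abs_entry M)"
    unfolding norm1_def vm_nth
  proof (rule sum_mono)
    fix j
    have "\<bar>\<Sum>i\<in>UNIV. x$i * M$i$j\<bar> \<le> (\<Sum>i\<in>UNIV. \<bar>x$i * M$i$j\<bar>)" by (rule sum_abs)
    also have "\<dots> \<le> (\<Sum>i\<in>UNIV. \<bar>x$i\<bar> * max_abs_entry M)"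
      by (rule sum_mono) (simp only: abs_mult, intro mult_left_mono max_abs_ge abs_ge_zero)
    finally show "\<bar>\<Sum>i\<in>UNIV. x$i * M$i$j\<bar> \<le> (\<Sum>i\<in>UNIV. \<bar>x$i\<bar> * max_abs_entry M)" .
  qed
  also have "\<dots> = norm1 x * (real CARD('n) * max_abs_entry M)"
    unfolding norm1_def sum_distrib_right by (simp add: sum_distrib_left mult_ac)
  finally show ?thesis .
qed

lemma abs_min: "\<bar>a - b\<bar> = a + b - 2 * min a (b::real)"
  by (simp add: abs_if min_def)

lemma contraction:
  fixes x :: "real^'n::finite" and A :: "real^'n^'n"
  assumes A: "right_stochastic A" and x: "(\<Sum>i\<in>UNIV. x$i) = 0"
  shows "norm1 (x v* A) \<le> (1 - dobrushin A) * norm1 x"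
proof -
  define \<sigma> where "\<sigma> = dobrushin A"
  define p where "p i = max (x$i) 0" for i
  define q where "q i = max (-(x$i)) 0" for i
  define s where "s = (\<Sum>i\<in>UNIV. p i)"
  have xpq: "x$i = p i - q i" for i by (simp add: p_def q_def max_def)
  have apq: "\<bar>x$i\<bar> = p i + q i" for i by (simp add: p_def q_def max_def)
  have p0: "p i \<ge> 0" "q i \<ge> 0" for i by (auto simp: p_def q_def)
  have sq: "(\<Sum>i\<in>UNIV. q i) = s"
    using x unfolding s_def xpq by (simp add: sum_subtractf)
  have n1: "norm1 x = 2 * s" unfolding norm1_def apq s_def
    using sq s_def by (simp add: sum.distrib)
  have s0: "s \<ge> 0" unfolding s_def by (simp add: sum_nonneg p0)
  have rowsum: "(\<Sum>j\<in>UNIV. \<bar>A$i$j - A$k$j\<bar>) \<le> 2 - 2 * \<sigma>" for i k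
  proof -
    have "(\<Sum>j\<in>UNIV. \<bar>A$i$j - A$k$j\<bar>) = (\<Sum>j\<in>UNIV. A$i$j) + (\<Sum>j\<in>UNIV. A$k$j)
       - 2 * (\<Sum>j\<in>UNIV. min (A$i$j) (A$k$j))"
      unfolding abs_min by (simp add: sum.distrib sum_subtractf sum_distrib_left)
    also have "\<dots> \<le> 2 - 2 * \<sigma>"
      using A dob_le[of A i k] unfolding right_stochastic_def \<sigma>_def by simp
    finally show ?thesis .
  qed
  show ?thesis
  proof (cases "s = 0")
    case True
    then have "p i = 0" for i using s_def sum_nonneg_eq_0_iff[of UNIV p] p0 by auto
    moreover have "q i = 0" for i using True sq sum_nonneg_eq_0_iff[of UNIV q] p0 by auto
    ultimately have "x = 0" by (simp add: vec_eq_iff xpq)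
    then show ?thesis by (simp add: norm1_def)
  next
    case False
    then have spos: "s > 0" using s0 by simp
    have comp: "(x v* A)$j = (\<Sum>i\<in>UNIV. \<Sum>k\<in>UNIV. p i * q k * (A$i$j - A$k$j)) / s" for j
    proof -
      have "(\<Sum>i\<in>UNIV. \<Sum>k\<in>UNIV. p i * q k * (A$i$j - A$k$j))
          = (\<Sum>i\<in>UNIV. \<Sum>k\<in>UNIV. p i * q k * A$i$j) - (\<Sum>i\<in>UNIV. \<Sum>k\<in>UNIV. p i * q k * A$k$j)"
        by (simp add: right_diff_distrib sum_subtractf)
      also have "(\<Sum>i\<in>UNIV. \<Sum>k\<in>UNIV. p i * q k * A$i$j) = s * (\<Sum>i\<in>UNIV. p i * A$i$j)"
        by (simp add: sq sum_distrib_left sum_distrib_right[symmetric] mult.commute mult.left_commute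
              flip: sum_distrib_left)
      also have "(\<Sum>i\<in>UNIV. \<Sum>k\<in>UNIV. p i * q k * A$k$j) = s * (\<Sum>k\<in>UNIV. q k * A$k$j)"
      proof -
        have "(\<Sum>i\<in>UNIV. \<Sum>k\<in>UNIV. p i * q k * A$k$j) = (\<Sum>k\<in>UNIV. \<Sum>i\<in>UNIV. p i * q k * A$k$j)"
          by (rule sum.swap)
        also have "\<dots> = (\<Sum>k\<in>UNIV. s * (q k * A$k$j))"
          unfolding s_def by (simp only: sum_distrib_right mult.assoc)
        also have "\<dots> = s * (\<Sum>k\<in>UNIV. q k * A$k$j)"
          by (simp only: sum_distrib_left)
        finally show ?thesis .
      qed
      finally have "(\<Sum>i\<in>UNIV. \<Sum>k\<in>UNIV. p i * q k * (A$i$j - A$k$j)) = s * (x v* A)$j"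
        by (simp add: vm_nth xpq left_diff_distrib sum_subtractf right_diff_distrib)
      then show ?thesis using spos by simp
    qed
    have "norm1 (x v* A) \<le> (\<Sum>j\<in>UNIV. (\<Sum>i\<in>UNIV. \<Sum>k\<in>UNIV. p i * q k * \<bar>A$i$j - A$k$j\<bar>) / s)"
      unfolding norm1_def comp
    proof (rule sum_mono)
      fix j
      have "\<bar>\<Sum>i\<in>UNIV. \<Sum>k\<in>UNIV. p i * q k * (A$i$j - A$k$j)\<bar>
          \<le> (\<Sum>i\<in>UNIV. \<bar>\<Sum>k\<in>UNIV. p i * q k * (A$i$j - A$k$j)\<bar>)" by (rule sum_abs)
      also have "\<dots> \<le> (\<Sum>i\<in>UNIV. \<Sum>k\<in>UNIV. \<bar>p i * q k * (A$i$j - A$k$j)\<bar>)"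
        by (rule sum_mono) (rule sum_abs)
      also have "\<dots> = (\<Sum>i\<in>UNIV. \<Sum>k\<in>UNIV. p i * q k * \<bar>A$i$j - A$k$j\<bar>)"
        using p0 by (simp add: abs_mult)
      finally show "\<bar>(\<Sum>i\<in>UNIV. \<Sum>k\<in>UNIV. p i * q k * (A$i$j - A$k$j)) / s\<bar>
          \<le> (\<Sum>i\<in>UNIV. \<Sum>k\<in>UNIV. p i * q k * \<bar>A$i$j - A$k$j\<bar>) / s"
        using spos by (simp add: divide_right_mono)
    qed
    also have "\<dots> = (\<Sum>i\<in>UNIV. \<Sum>k\<in>UNIV. p i * q k * (\<Sum>j\<in>UNIV. \<bar>A$i$j - A$k$j\<bar>)) / s"
    proof -
      have "(\<Sum>j\<in>UNIV. \<Sum>i\<in>UNIV. \<Sum>k\<in>UNIV. p i * q k * \<bar>A$i$j - A$k$j\<bar>)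
          = (\<Sum>i\<in>UNIV. \<Sum>k\<in>UNIV. \<Sum>j\<in>UNIV. p i * q k * \<bar>A$i$j - A$k$j\<bar>)"
        by (subst sum.swap) (rule sum.cong[OF refl], rule sum.swap)
      then show ?thesis by (simp only: sum_divide_distrib[symmetric] sum_distrib_left)
    qed
    also have "\<dots> \<le> (\<Sum>i\<in>UNIV. \<Sum>k\<in>UNIV. p i * q k * (2 - 2 * \<sigma>)) / s"
    proof (rule divide_right_mono)
      show "0 \<le> s" using spos by simp
      show "(\<Sum>i\<in>UNIV. \<Sum>k\<in>UNIV. p i * q k * (\<Sum>j\<in>UNIV. \<bar>A$i$j - A$k$j\<bar>))
          \<le> (\<Sum>i\<in>UNIV. \<Sum>k\<in>UNIV. p i * q k * (2 - 2 * \<sigma>))"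
      proof (rule sum_mono, rule sum_mono)
        fix i k
        have "0 \<le> p i * q k" using p0 by simp
        then show "p i * q k * (\<Sum>j\<in>UNIV. \<bar>A$i$j - A$k$j\<bar>) \<le> p i * q k * (2 - 2 * \<sigma>)"
          using rowsum[of i k] by (rule mult_left_mono[rotated])
      qed
    qed
    also have "\<dots> = s * s * (2 - 2 * \<sigma>) / s"
    proof -
      have "(\<Sum>i\<in>UNIV. \<Sum>k\<in>UNIV. p i * q k * (2 - 2 * \<sigma>)) = (\<Sum>i\<in>UNIV. p i) * ((\<Sum>k\<in>UNIV. q k) * (2 - 2 * \<sigma>))"
        by (simp add: sum_distrib_left sum_distrib_right mult.assoc) (rule sum.swap)
      then show ?thesis by (simp add: sq mult.assoc flip: s_def)
    qed
    also have "\<dots> = (1 - \<sigma>) * norm1 x" using spos n1 by (simp add: field_simps)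
    finally show ?thesis by (simp add: \<sigma>_def)
  qed
qed

theorem lemma4:
  fixes A :: "real^'n::finite^'n" and As :: "nat \<Rightarrow> real^'n^'n"
    and mu_star mu0 :: "real^'n" and \<epsilon> :: real
  assumes "right_stochastic A" and "dobrushin A > 0"
    and "\<forall>k. right_stochastic (As k)"
    and "prob_vector mu_star" and "mu_star = mu_star v* A"
    and "0 < \<epsilon>" and "\<epsilon> < 1"
    and "\<forall>k. max_abs_entry (As k - A) \<le> dobrushin A * \<epsilon> / (2 * real CARD('n))"
    and "prob_vector mu0"
  shows "limsup (\<lambda>k. ereal (norm1 (mu0 v* left_prod As k - mu_star))) \<le> ereal \<epsilon>"
proof -
  define \<sigma> where "\<sigma> = dobrushin A"
  define mu where "mu k = mu0 v* left_prod As k" for k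
  define e where "e k = norm1 (mu k - mu_star)" for k
  have s1: "\<sigma> \<le> 1" using dob_le1[OF assms(1)] by (simp add: \<sigma>_def)
  have s0: "\<sigma> > 0" using assms(2) by (simp add: \<sigma>_def)
  have musuc: "mu (Suc k) = mu k v* As (Suc k)" for k
    by (simp add: mu_def vector_matrix_mul_assoc)
  have pm: "prob_vector (mu k)" for k
  proof (induction k)
    case 0 then show ?case using prob_mult[OF assms(9)] assms(3) by (simp add: mu_def)
  next
    case (Suc k) then show ?case using prob_mult assms(3) musuc by metis
  qed
  have n0: "real CARD('n) > 0" by simp
  have step: "e (Suc k) \<le> (1 - \<sigma>) * e k + \<sigma> * \<epsilon> / 2" for k
  proof -
    have eq: "mu (Suc k) - mu_star = (mu k - mu_star) v* A + mu k v* (As (Suc k) - A)"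
      using assms(5) by (simp add: musuc vm_diff_left vm_diff_right)
    have sz: "(\<Sum>i\<in>UNIV. (mu k - mu_star)$i) = 0"
      using pm[of k] assms(4) by (simp add: prob_vector_def sum_subtractf)
    have c: "norm1 ((mu k - mu_star) v* A) \<le> (1 - \<sigma>) * e k"
      using contraction[OF assms(1) sz] by (simp add: e_def \<sigma>_def)
    have "norm1 (mu k v* (As (Suc k) - A)) \<le> 1 * (real CARD('n) * max_abs_entry (As (Suc k) - A))"
      using perturb[of "mu k"] norm1_prob[OF pm] by simp
    also have "\<dots> \<le> real CARD('n) * (\<sigma> * \<epsilon> / (2 * real CARD('n)))"
    proof -
      have "max_abs_entry (As (Suc k) - A) \<le> \<sigma> * \<epsilon> / (2 * real CARD('n))"
        using assms(8) by (simp add: \<sigma>_def)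
      then have "real CARD('n) * max_abs_entry (As (Suc k) - A) \<le> real CARD('n) * (\<sigma> * \<epsilon> / (2 * real CARD('n)))"
        using n0 by (intro mult_left_mono) auto
      then show ?thesis by simp
    qed
    also have "\<dots> = \<sigma> * \<epsilon> / 2" using n0 by (simp add: field_simps)
    finally have p: "norm1 (mu k v* (As (Suc k) - A)) \<le> \<sigma> * \<epsilon> / 2" .
    show ?thesis unfolding e_def eq using norm1_add c p unfolding e_def by smt
  qed
  have bound: "e k \<le> \<epsilon> / 2 + 2 * (1 - \<sigma>) ^ k" for k
  proof (induction k)
    case 0
    have "e 0 \<le> 2" unfolding e_def
      using norm1_diff[of "mu 0" mu_star] norm1_prob[OF pm] norm1_prob[OF assms(4)] by simp
    then show ?case using assms(6) by simp
  next
    case (Suc k)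
    have "e (Suc k) \<le> (1 - \<sigma>) * e k + \<sigma> * \<epsilon> / 2" by (rule step)
    also have "\<dots> \<le> (1 - \<sigma>) * (\<epsilon> / 2 + 2 * (1 - \<sigma>) ^ k) + \<sigma> * \<epsilon> / 2"
      using Suc s1 by (simp add: mult_left_mono)
    also have "\<dots> = \<epsilon> / 2 + 2 * (1 - \<sigma>) ^ Suc k" by (simp add: field_simps)
    finally show ?case .
  qed
  have lim: "(\<lambda>k. 2 * (1 - \<sigma>) ^ k) \<longlonglongrightarrow> 0"
    using tendsto_mult_left[OF LIMSEQ_power_zero[of "1 - \<sigma>"], of 2] s0 s1 by simp
  have "eventually (\<lambda>k. 2 * (1 - \<sigma>) ^ k < \<epsilon> / 2) sequentially"
    using order_tendstoD(2)[OF lim, of "\<epsilon> / 2"] assms(6) by simp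
  then have "eventually (\<lambda>k. ereal (norm1 (mu0 v* left_prod As k - mu_star)) \<le> ereal \<epsilon>) sequentially"
  proof eventually_elim
    case (elim k)
    have "norm1 (mu0 v* left_prod As k - mu_star) = e k" by (simp add: e_def mu_def)
    also have "\<dots> \<le> \<epsilon>" using bound[of k] elim by linarith
    finally show ?case by simp
  qed
  then show ?thesis by (rule Limsup_bounded)
qed

end
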